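(* If $s\ge4$ and $s$ is even, then $\mathrm{ex}(n,P^{(3)}_s)\ge\left(1-\frac{4}{(s-2)s}+o(1)\right)\binom{n}{3}$, where $o(1)\to0$ as $n\to\infty$ with $s$ fixed.
   Context: An ordered $3$-uniform hypergraph is a $3$-uniform hypergraph with linearly ordered vertex set; $G$ contains $H$ if there is an order-preserving injection $f:V(H)\to V(G)$ with $f(e)\in E(G)$ for all $e\in E(H)$. $\mathrm{ex}(n,H)$ is the maximum number of edges of an $n$-vertex ordered $3$-uniform hypergraph not containing $H$. $P^{(3)}_s$ has vertices $v_1<\dots<v_s$ and edges $\{v_j,v_{j+1},v_{j+2}\}$ for $1\le j\le s-2$. *)

theory Defs
  imports Complex_Main
begin

text \<open>An ordered 3-uniform hypergraph on n vertices: vertex set {0..<n} with the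
  natural order, given by its number of vertices and its edge set.\<close>

type_synonym ohg = "nat \<times> nat set set"

definition hypergraph3 :: "ohg \<Rightarrow> bool" where
  "hypergraph3 G \<longleftrightarrow> (\<forall>e\<in>snd G. e \<subseteq> {..<fst G} \<and> card e = 3)"

definition ocontains :: "ohg \<Rightarrow> ohg \<Rightarrow> bool" where
  "ocontains G H \<longleftrightarrow> (\<exists>f. strict_mono_on {..<fst H} f \<and> f ` {..<fst H} \<subseteq> {..<fst G}
       \<and> (\<forall>e\<in>snd H. f ` e \<in> snd G))"

definition tight_path :: "nat \<Rightarrow> ohg" where
  "tight_path s = (s, {{j, j+1, j+2} | j. j + 2 < s})"

definition ex3 :: "nat \<Rightarrow> ohg \<Rightarrow> nat" where
  "ex3 n H = Max {card E | E. hypergraph3 (n, E) \<and> \<not> ocontains (n, E) H}"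

end

theory Submission
  imports Defs
begin

lemma card_ge_interval:
  assumes "L \<le> real y"
  shows "real (card {x::nat. L \<le> real x \<and> x < y}) \<le> real y - L + 1"
proof -
  have sub: "{x::nat. L \<le> real x \<and> x < y} \<subseteq> {nat \<lceil>L\<rceil>..<y}"
    by (auto simp: ceiling_le_iff le_nat_iff)
  have "card {x::nat. L \<le> real x \<and> x < y} \<le> card {nat \<lceil>L\<rceil>..<y}"
    by (rule card_mono[OF _ sub]) simp
  also have "\<dots> = y - nat \<lceil>L\<rceil>" by simp
  finally have c: "card {x::nat. L \<le> real x \<and> x < y} \<le> y - nat \<lceil>L\<rceil>" .
  have "real (y - nat \<lceil>L\<rceil>) \<le> real y - L + 1"
  proof (cases "nat \<lceil>L\<rceil> \<le> y")
    case True
    then have "real (y - nat \<lceil>L\<rceil>) = real y - real (nat \<lceil>L\<rceil>)" by (simp add: of_nat_diff)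
    moreover have "L \<le> real (nat \<lceil>L\<rceil>) + 1"
      by (metis ceiling_le_iff le_nat_iff linorder_linear nat_ceiling_le_eq of_nat_0_le_iff order_trans add_increasing2 le_of_int_ceiling of_int_of_nat_eq zero_le_one)
    ultimately show ?thesis by linarith
  next
    case False
    then show ?thesis using assms by simp
  qed
  moreover from c have "real (card {x::nat. L \<le> real x \<and> x < y}) \<le> real (y - nat \<lceil>L\<rceil>)" by (simp only: of_nat_le_iff)
  ultimately show ?thesis by linarith
qed

lemma card_lt_interval:
  assumes "real y \<le> U"
  shows "real (card {z::nat. y < z \<and> real z < U}) \<le> U - real y"
proof -
  have sub: "{z::nat. y < z \<and> real z < U} \<subseteq> {Suc y..<nat \<lceil>U\<rceil>}"
  proof
    fix z assume "z \<in> {z::nat. y < z \<and> real z < U}"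
    then have a: "y < z" "real z < U" by auto
    then have "int z < \<lceil>U\<rceil>" by (simp add: less_ceiling_iff)
    then have "z < nat \<lceil>U\<rceil>" by linarith
    then show "z \<in> {Suc y..<nat \<lceil>U\<rceil>}" using a by simp
  qed
  have "card {z::nat. y < z \<and> real z < U} \<le> card {Suc y..<nat \<lceil>U\<rceil>}"
    by (rule card_mono[OF _ sub]) simp
  also have "\<dots> = nat \<lceil>U\<rceil> - Suc y" by simp
  finally have c: "card {z::nat. y < z \<and> real z < U} \<le> nat \<lceil>U\<rceil> - Suc y" .
  have "real (nat \<lceil>U\<rceil> - Suc y) \<le> U - real y"
  proof (cases "Suc y \<le> nat \<lceil>U\<rceil>")
    case True
    then have "real (nat \<lceil>U\<rceil> - Suc y) = real (nat \<lceil>U\<rceil>) - real y - 1" by (simp add: of_nat_diff)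
    moreover have "real (nat \<lceil>U\<rceil>) < U + 1"
    proof -
      have "0 \<le> U" using assms by (metis of_nat_0_le_iff order_trans)
      then have "0 \<le> \<lceil>U\<rceil>" by simp
      then have "real (nat \<lceil>U\<rceil>) = of_int \<lceil>U\<rceil>" by simp
      moreover have "of_int \<lceil>U\<rceil> < U + 1" by linarith
      ultimately show ?thesis by simp
    qed
    ultimately show ?thesis by linarith
  next
    case False
    then show ?thesis using assms by simp
  qed
  moreover from c have "real (card {z::nat. y < z \<and> real z < U}) \<le> real (nat \<lceil>U\<rceil> - Suc y)" by (simp only: of_nat_le_iff)
  ultimately show ?thesis by linarith
qed

lemma sum_split_add: fixes G :: "nat \<Rightarrow> 'a::comm_monoid_add" and a b :: nat shows "(\<Sum>y<a+b. G y) = (\<Sum>y<a. G y) + (\<Sum>t<b. G (a+t))"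
  by (induction b) (simp_all add: add.assoc)

lemma sum_blocks: fixes G :: "nat \<Rightarrow> 'a::comm_monoid_add" and f :: "nat \<Rightarrow> nat" shows
  "(\<Sum>y<(\<Sum>k<K. f k). G y) = (\<Sum>l<K. \<Sum>t<f l. G ((\<Sum>k<l. f k) + t))"
  by (induction K) (simp_all add: sum_split_add)

lemma sum_s1: "(\<Sum>t<N. real t) = real N * (real N - 1) / 2"
  by (induction N) (simp_all add: field_simps)

lemma sum_s2: "(\<Sum>t<N. real t * real t) = real N * (real N - 1) * (2 * real N - 1) / 6"
  by (induction N) (simp_all add: field_simps)

lemma sum_t1: "(\<Sum>t<N. real t * (real N - real t)) = (real N ^ 3 - real N) / 6"
proof -
  have "(\<Sum>t<N. real t * (real N - real t)) = real N * (\<Sum>t<N. real t) - (\<Sum>t<N. real t * real t)"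
    by (simp add: sum_subtractf sum_distrib_left algebra_simps)
  also have "\<dots> = (real N ^ 3 - real N) / 6" by (simp add: sum_s1 sum_s2 field_simps power3_eq_cube)
  finally show ?thesis .
qed

lemma sum_t2: "(\<Sum>t<N. (real N - real t)) = real N * (real N + 1) / 2"
proof -
  have "(\<Sum>t<N. (real N - real t)) = real N * real N - (\<Sum>t<N. real t)"
    by (simp add: sum_subtractf)
  also have "\<dots> = real N * (real N + 1) / 2" by (simp add: sum_s1 field_simps)
  finally show ?thesis .
qed

lemma block_sum:
  fixes N :: nat and P Q :: real
  assumes "0 < N" "0 \<le> P" "0 \<le> Q"
  shows "(\<Sum>t<N. (real t * (N+P)/N + 1) * ((N - real t) * (N+Q)/N))
         \<le> N*(N+P)*(N+Q)/6 + (N+Q)*(N+1)/2"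
proof -
  define a where "a = (N+P)/N"
  define b where "b = (N+Q)/N"
  have "(\<Sum>t<N. (real t * (N+P)/N + 1) * ((N - real t) * (N+Q)/N))
      = (\<Sum>t<N. a*b*(real t * (N - real t)) + b * (N - real t))"
    unfolding a_def b_def by (intro sum.cong) (auto simp: field_simps)
  also have "\<dots> = a*b*(\<Sum>t<N. real t * (N - real t)) + b * (\<Sum>t<N. (N - real t))"
    by (simp add: sum.distrib sum_distrib_left)
  also have "\<dots> = a*b*((real N ^ 3 - real N) / 6) + b * (real N * (real N + 1) / 2)"
    by (simp add: sum_t1 sum_t2)
  also have "\<dots> \<le> a*b*(real N ^ 3 / 6) + b * (real N * (real N + 1) / 2)"
    using assms unfolding a_def b_def by (intro add_mono mult_left_mono) auto
  also have "\<dots> = N*(N+P)*(N+Q)/6 + (N+Q)*(N+1)/2"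
    using assms unfolding a_def b_def by (simp add: field_simps power3_eq_cube)
  finally show ?thesis .
qed

locale cons =
  fixes m M :: nat
  assumes m1: "1 \<le> m" and M1: "1 \<le> M"
begin

definition c :: "nat \<Rightarrow> nat" where
  "c l = (if even l then m - l div 2 else l div 2 + 1)"
definition sz :: "nat \<Rightarrow> nat" where "sz l = c l * M"
definition S :: "nat \<Rightarrow> nat" where "S l = (\<Sum>k<l. sz k)"
definition n0 :: nat where "n0 = S (2*m)"
definition blk :: "nat \<Rightarrow> nat" where "blk v = Max {l. l < 2*m \<and> S l \<le> v}"
definition loc :: "nat \<Rightarrow> nat" where "loc v = v - S (blk v)"
definition pv :: "nat \<Rightarrow> nat" where "pv l = (if l = 0 then 0 else sz (l - 1))"
definition lo :: "nat \<Rightarrow> real" where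
  "lo v = real (S (blk v)) - real (loc v) * real (pv (blk v)) / real (sz (blk v))"
definition hi :: "nat \<Rightarrow> real" where
  "hi v = real (S (Suc (blk v))) + real (sz (blk v) - loc v) * real (sz (Suc (blk v))) / real (sz (blk v))"
definition h :: "nat \<Rightarrow> nat \<Rightarrow> nat" where
  "h a b = (if lo b \<le> real a then blk b else if real b < hi a then blk a else Suc (blk a))"

lemma c_pos: "l < 2*m \<Longrightarrow> 1 \<le> c l"
  unfolding c_def by auto

lemma sz_pos: "l < 2*m \<Longrightarrow> 0 < sz l"
  using c_pos M1 unfolding sz_def by (simp add: Suc_le_eq)

lemma c_2m: "c (2*m) = 0" unfolding c_def by simp

lemma S_Suc: "S (Suc l) = S l + sz l" unfolding S_def by simp

lemma S_0: "S 0 = 0" unfolding S_def by simp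

lemma S_mono: "l \<le> l' \<Longrightarrow> S l \<le> S l'"
  unfolding S_def by (rule sum_mono2) auto

lemma S_strict: "l < l' \<Longrightarrow> l < 2*m \<Longrightarrow> S l < S l'"
proof -
  assume a: "l < l'" "l < 2*m"
  have "S l < S (Suc l)" using sz_pos[OF a(2)] S_Suc by simp
  also have "\<dots> \<le> S l'" using a by (intro S_mono) simp
  finally show ?thesis .
qed

lemma sum_c: "(\<Sum>l<2*k. c l) = k * (m+1)" if "k \<le> m" for k
  using that
proof (induction k)
  case 0 then show ?case by simp
next
  case (Suc k)
  have e: "2 * Suc k = Suc (Suc (2*k))" by simp
  have "c (2*k) = m - k" "c (Suc (2*k)) = k + 1" unfolding c_def by auto
  then show ?case using Suc by (simp add: e)
qed

lemma n0_eq: "n0 = m*(m+1)*M"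
proof -
  have "n0 = (\<Sum>l<2*m. c l) * M" unfolding n0_def S_def sz_def by (simp add: sum_distrib_right)
  then show ?thesis using sum_c[of m] by simp
qed

lemma cc: "l < 2*m \<Longrightarrow> (c l + (if l = 0 then 0 else c (l-1))) * (c l + c (Suc l)) = m*(m+1)"
proof -
  assume l: "l < 2*m"
  show ?thesis
  proof (cases "even l")
    case True
    then obtain i where i: "l = 2*i" by blast
    have "c l = m - i" "c (Suc l) = i + 1" using i unfolding c_def by auto
    moreover have "(if l = 0 then 0 else c (l-1)) = i"
      using i unfolding c_def by (cases i) auto
    moreover have "i < m" using i l by simp
    ultimately show ?thesis by simp
  next
    case False
    then obtain i where i: "l = 2*i+1" using oddE by blast
    have "c l = i+1" "c (Suc l) = m - (i+1)" "c (l-1) = m - i" using i unfolding c_def by auto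
    moreover have "i < m" using i l by simp
    ultimately show ?thesis using i by (simp add: algebra_simps)
  qed
qed

lemma blk_props: assumes "v < n0"
  shows "blk v < 2*m" "S (blk v) \<le> v" "v < S (Suc (blk v))"
proof -
  let ?A = "{l. l < 2*m \<and> S l \<le> v}"
  have fin: "finite ?A" by simp
  have ne: "0 \<in> ?A" using m1 S_0 by simp
  have mem: "blk v \<in> ?A" unfolding blk_def using fin ne Max_in by blast
  then show "blk v < 2*m" "S (blk v) \<le> v" by auto
  show "v < S (Suc (blk v))"
  proof (rule ccontr)
    assume "\<not> v < S (Suc (blk v))"
    then have le: "S (Suc (blk v)) \<le> v" by simp
    show False
    proof (cases "Suc (blk v) < 2*m")
      case True
      then have "Suc (blk v) \<in> ?A" using le by simp
      then have "Suc (blk v) \<le> blk v" unfolding blk_def using fin Max_ge by blast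
      then show False by simp
    next
      case False
      then have "Suc (blk v) = 2*m" using mem by simp
      then show False using le assms unfolding n0_def by simp
    qed
  qed
qed

lemma blk_ge: "S l \<le> v \<Longrightarrow> l < 2*m \<Longrightarrow> l \<le> blk v"
  unfolding blk_def by (rule Max_ge) auto

lemma blk_lt: assumes "v < S l" "v < n0" shows "blk v < l"
proof (rule ccontr)
  assume "\<not> blk v < l"
  then have "S l \<le> S (blk v)" by (intro S_mono) simp
  then show False using blk_props[OF assms(2)] assms(1) by simp
qed

lemma blk_mono: "a \<le> b \<Longrightarrow> b < n0 \<Longrightarrow> blk a \<le> blk b"
  using blk_props[of a] blk_ge[of "blk a" b] by simp

lemma blk_eq: assumes "l < 2*m" "S l \<le> v" "v < S (Suc l)" shows "blk v = l"
proof -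
  have v: "v < n0" using assms S_mono[of "Suc l" "2*m"] unfolding n0_def by simp
  have "l \<le> blk v" using blk_ge assms by simp
  moreover have "blk v < Suc l" using blk_lt[OF assms(3) v] .
  ultimately show ?thesis by simp
qed

lemma Sge_blk: assumes "S l \<le> v" "v < n0" shows "l \<le> blk v"
proof (cases "l < 2*m")
  case True then show ?thesis using blk_ge assms by simp
next
  case False
  then have "S (2*m) \<le> S l" by (intro S_mono) simp
  then show ?thesis using assms unfolding n0_def by simp
qed

lemma loc_lt: "v < n0 \<Longrightarrow> loc v < sz (blk v)"
  using blk_props[of v] S_Suc[of "blk v"] unfolding loc_def by simp

lemma v_eq: "v < n0 \<Longrightarrow> v = S (blk v) + loc v"
  using blk_props[of v] unfolding loc_def by simp

lemma lo_le: "v < n0 \<Longrightarrow> lo v \<le> real (S (blk v))"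
  unfolding lo_def by simp

lemma hi_ge: "v < n0 \<Longrightarrow> real (S (Suc (blk v))) \<le> hi v"
  unfolding hi_def by simp

lemma key: assumes xy: "x < y" "y < n0" and b: "blk y = Suc (blk x)" and lt: "real x < lo y"
  shows "real y < hi x"
proof -
  define l where "l = blk x"
  have x: "x < n0" using xy by simp
  have l2: "Suc l < 2*m" using blk_props(1)[OF xy(2)] b l_def by simp
  define N where "N = sz l"
  define N' where "N' = sz (Suc l)"
  have N: "0 < N" "0 < N'" using sz_pos l2 N_def N'_def by auto
  define t where "t = loc x"
  define t' where "t' = loc y"
  have t: "t < N" using loc_lt[OF x] t_def N_def l_def by simp
  have ex: "real x = real (S l) + real t" using v_eq[OF x] t_def l_def by simp
  have ey: "real y = real (S (Suc l)) + real t'" using v_eq[OF xy(2)] t'_def b l_def by simp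
  have SS: "real (S (Suc l)) = real (S l) + real N" using S_Suc N_def by simp
  have loy: "lo y = real (S (Suc l)) - real t' * real N / real N'"
    unfolding lo_def using b l_def t'_def pv_def N_def N'_def by simp
  have hix: "hi x = real (S (Suc l)) + (real N - real t) * real N' / real N"
    unfolding hi_def using l_def t_def N_def N'_def t by (simp add: of_nat_diff)
  from lt have "real t' * real N / real N' < real N - real t" using ex loy SS by simp
  then have "real t' * real N < (real N - real t) * real N'" using N by (simp add: field_simps)
  then have "real t' < (real N - real t) * real N' / real N" using N by (simp add: field_simps)
  then show ?thesis using ey hix by simp
qed

lemma h_le: assumes "x < y" "y < n0" shows "h x y \<le> blk y"
proof -
  have "blk x \<le> blk y" using blk_mono assms by simp
  moreover have "real y \<ge> hi x \<Longrightarrow> blk x < blk y"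
  proof -
    assume a: "real y \<ge> hi x"
    have "S (Suc (blk x)) \<le> y" using hi_ge[of x] a assms by simp
    then show ?thesis using Sge_blk[of "Suc (blk x)" y] assms by simp
  qed
  ultimately show ?thesis unfolding h_def by auto
qed

lemma h_ge: assumes "y < z" "z < n0" shows "blk y \<le> h y z"
  using blk_mono[of y z] assms unfolding h_def by auto

lemma h_lt: assumes "x < y" "y < n0" "real x < lo y" shows "h x y < blk y"
proof -
  have xb: "blk x < blk y"
    using lo_le[of y] assms blk_lt[of x "blk y"] by simp
  have "\<not> (hi x \<le> real y \<and> Suc (blk x) = blk y)"
    using key[of x y] assms by auto
  then show ?thesis using xb assms unfolding h_def by auto
qed

lemma h_gt: assumes "y < z" "z < n0" "hi y \<le> real z" shows "blk y < h y z"
proof -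
  have "S (Suc (blk y)) \<le> z" using hi_ge[of y] assms by simp
  then have "Suc (blk y) \<le> blk z" using Sge_blk[of "Suc (blk y)" z] assms by simp
  then show ?thesis using assms unfolding h_def by auto
qed

lemma h_bound: "x < y \<Longrightarrow> y < n0 \<Longrightarrow> h x y < 2*m"
proof -
  assume "x < y" "y < n0"
  then show ?thesis using h_le[of x y] blk_props(1)[of y] by simp
qed

lemma bad: assumes "x < y" "y < z" "z < n0" "h y z \<le> h x y"
  shows "lo y \<le> real x" "real z < hi y"
proof -
  have y: "y < n0" using assms by simp
  show "lo y \<le> real x"
  proof (rule ccontr)
    assume "\<not> lo y \<le> real x"
    then have "h x y < blk y" using h_lt[of x y] assms y by simp
    moreover have "blk y \<le> h y z" using h_ge[of y z] assms by simp
    ultimately show False using assms(4) by simp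
  qed
  show "real z < hi y"
  proof (rule ccontr)
    assume "\<not> real z < hi y"
    then have "blk y < h y z" using h_gt[of y z] assms by simp
    moreover have "h x y \<le> blk y" using h_le[of x y] assms y by simp
    ultimately show False using assms(4) by simp
  qed
qed

end

context cons begin

definition Xs :: "nat \<Rightarrow> nat set" where "Xs y = {x. lo y \<le> real x \<and> x < y}"
definition Zs :: "nat \<Rightarrow> nat set" where "Zs y = {z. y < z \<and> real z < hi y}"

lemma c_le: "l < 2*m \<Longrightarrow> c l \<le> m" unfolding c_def by auto

lemma c_adj: "l < 2*m \<Longrightarrow> c l + c (Suc l) \<le> m + 1"
  unfolding c_def by auto

lemma cardX: assumes "y < n0" shows "real (card (Xs y)) \<le> real y - lo y + 1"
  unfolding Xs_def using lo_le[OF assms] blk_props(2)[OF assms]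
  by (intro card_ge_interval) simp

lemma cardZ: assumes "y < n0" shows "real (card (Zs y)) \<le> hi y - real y"
  unfolding Zs_def using hi_ge[OF assms] blk_props(3)[OF assms]
  by (intro card_lt_interval) simp

lemma term_eq:
  assumes l: "l < 2*m" and t: "t < sz l"
  shows "(real (S l + t) - lo (S l + t) + 1) * (hi (S l + t) - real (S l + t))
     = (real t * (sz l + pv l)/sz l + 1) * ((sz l - real t) * (sz l + sz (Suc l))/sz l)"
proof -
  have b: "blk (S l + t) = l" using l t S_Suc by (intro blk_eq) auto
  have lc: "loc (S l + t) = t" unfolding loc_def b by simp
  have N: "0 < real (sz l)" using sz_pos l by simp
  have e1: "real (S l + t) - lo (S l + t) + 1 = real t * (sz l + pv l)/sz l + 1"
    unfolding lo_def b lc using N by (simp add: field_simps)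
  have e2: "hi (S l + t) - real (S l + t) = (sz l - real t) * (sz l + sz (Suc l))/sz l"
    unfolding hi_def b lc using N t by (simp add: field_simps of_nat_diff S_Suc)
  show ?thesis using e1 e2 by simp
qed

lemma block_bound:
  assumes l: "l < 2*m"
  shows "(\<Sum>t<sz l. (real t * (sz l + pv l)/sz l + 1) * ((sz l - real t) * (sz l + sz (Suc l))/sz l))
     \<le> real M ^ 3 * real (c l) * (real m * (real m + 1)) / 6 + (real (m+1) * real M)^2"
proof -
  have N: "0 < sz l" using sz_pos l by simp
  have "(\<Sum>t<sz l. (real t * (sz l + pv l)/sz l + 1) * ((sz l - real t) * (sz l + sz (Suc l))/sz l))
     \<le> sz l*(sz l+real (pv l))*(sz l+real (sz (Suc l)))/6 + (sz l+real (sz (Suc l)))*(sz l+1)/2"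
    using block_sum[of "sz l" "real (pv l)" "real (sz (Suc l))"] N by simp
  also have "sz l*(sz l+real (pv l))*(sz l+real (sz (Suc l))) = real M ^ 3 * real (c l) * (real m * (real m + 1))"
  proof -
    obtain cp where cp: "cp = (if l = 0 then 0 else c (l-1))" by simp
    have "(c l + cp) * (c l + c (Suc l)) = m*(m+1)" using cc l cp by simp
    then have "real ((c l + cp) * (c l + c (Suc l))) = real (m*(m+1))" by simp
    then have e: "(real (c l) + real cp) * (real (c l) + real (c (Suc l))) = real m * (real m + 1)"
      by (simp add: algebra_simps)
    have pv: "real (pv l) = real cp * real M" unfolding pv_def sz_def cp by simp
    have "sz l*(sz l+real (pv l))*(sz l+real (sz (Suc l)))
       = real M ^ 3 * real (c l) * ((real (c l) + real cp) * (real (c l) + real (c (Suc l))))"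
      unfolding pv unfolding sz_def by (simp add: algebra_simps power3_eq_cube)
    then show ?thesis by (simp only: e)
  qed
  also have "(sz l+real (sz (Suc l)))*(sz l+1)/2 \<le> (real (m+1) * real M)^2"
  proof -
    have a: "real (sz l) + real (sz (Suc l)) \<le> real (m+1) * real M"
      using c_adj[OF l] unfolding sz_def
      by (metis add_mult_distrib mult_le_mono1 of_nat_add of_nat_le_iff of_nat_mult)
    have b: "real (sz l) + 1 \<le> 2 * (real (m+1) * real M)"
    proof -
      have "c l \<le> m+1" using c_le[OF l] by simp
      then have "sz l \<le> (m+1) * M" unfolding sz_def by (rule mult_le_mono1)
      then have "real (sz l) \<le> real (m+1) * real M" by (metis of_nat_le_iff of_nat_mult)
      moreover have "1 \<le> real (m+1) * real M"
      proof -
        have "1 \<le> real M" using M1 by simp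
        moreover have "1 \<le> real (m+1)" by simp
        ultimately show ?thesis using mult_mono[of 1 "real (m+1)" 1 "real M"] by simp
      qed
      ultimately show ?thesis by simp
    qed
    have "(sz l+real (sz (Suc l)))*(sz l+1) \<le> (real (m+1) * real M) * (2 * (real (m+1) * real M))"
      using a b by (intro mult_mono) auto
    then show ?thesis by (simp add: power2_eq_square)
  qed
  finally show ?thesis by simp
qed

lemma sumXZ:
  "(\<Sum>y<n0. real (card (Xs y)) * real (card (Zs y)))
     \<le> real n0 ^ 3 / (6 * (real m * (real m + 1))) + 2 * real n0 ^ 2"
proof -
  have "(\<Sum>y<n0. real (card (Xs y)) * real (card (Zs y)))
      \<le> (\<Sum>y<n0. (real y - lo y + 1) * (hi y - real y))"
  proof (rule sum_mono)
    fix y assume "y \<in> {..<n0}"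
    then have y: "y < n0" by simp
    show "real (card (Xs y)) * real (card (Zs y)) \<le> (real y - lo y + 1) * (hi y - real y)"
      using cardX[OF y] cardZ[OF y] by (intro mult_mono) auto
  qed
  also have "\<dots> = (\<Sum>l<2*m. \<Sum>t<sz l. (real (S l + t) - lo (S l + t) + 1) * (hi (S l + t) - real (S l + t)))"
    unfolding n0_def S_def by (rule sum_blocks)
  also have "\<dots> = (\<Sum>l<2*m. \<Sum>t<sz l. (real t * (sz l + pv l)/sz l + 1) * ((sz l - real t) * (sz l + sz (Suc l))/sz l))"
    by (intro sum.cong refl term_eq) auto
  also have "\<dots> \<le> (\<Sum>l<2*m. real M ^ 3 * real (c l) * (real m * (real m + 1)) / 6 + (real (m+1) * real M)^2)"
    by (intro sum_mono block_bound) auto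
  also have "\<dots> = (\<Sum>l<2*m. (real M ^ 3 * (real m * (real m + 1)) / 6) * real (c l) + (real (m+1) * real M)^2)"
    by (intro sum.cong refl) (simp add: algebra_simps)
  also have "\<dots> = real M ^ 3 * (real m * (real m + 1)) / 6 * (\<Sum>l<2*m. real (c l)) + 2 * real m * (real (m+1) * real M)^2"
    by (simp add: sum.distrib sum_distrib_left)
  also have "(\<Sum>l<2*m. real (c l)) = real m * (real m + 1)"
  proof -
    have "real (\<Sum>l<2*m. c l) = real (m * (m+1))" using sum_c[of m] by simp
    then show ?thesis by (simp add: algebra_simps)
  qed
  also have "real M ^ 3 * (real m * (real m + 1)) / 6 * (real m * (real m + 1)) + 2 * real m * (real (m+1) * real M)^2
      \<le> real n0 ^ 3 / (6 * (real m * (real m + 1))) + 2 * real n0 ^ 2"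
  proof -
    have n: "real n0 = real m * (real m + 1) * real M" using n0_eq by (simp add: algebra_simps)
    have mp: "0 < real m * (real m + 1)" using m1 by simp
    have e: "real n0 ^ 3 / (6 * (real m * (real m + 1))) = real M ^ 3 * (real m * (real m + 1)) / 6 * (real m * (real m + 1))"
      using mp unfolding n by (simp add: field_simps power3_eq_cube)
    have "2 * real m * (real (m+1) * real M)^2 \<le> 2 * real n0 ^ 2"
    proof -
      have "real m \<le> real m * real m" using m1 by simp
      then have "real m * (real (m+1) * real M)^2 \<le> (real m * real m) * (real (m+1) * real M)^2"
        by (intro mult_right_mono) auto
      then show ?thesis unfolding n by (simp add: power2_eq_square algebra_simps)
    qed
    then show ?thesis using e by linarith
  qed
  finally show ?thesis .
qed

end

lemma sorted_eq:
  fixes x y z a b c :: nat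
  assumes "x < y" "y < z" "a < b" "b < c" "{x,y,z} = {a,b,c}"
  shows "x = a \<and> y = b \<and> z = c"
proof -
  have m1: "x \<in> {a,b,c}" "y \<in> {a,b,c}" "z \<in> {a,b,c}" using assms(5) by blast+
  have m2: "a \<in> {x,y,z}" "b \<in> {x,y,z}" "c \<in> {x,y,z}" using assms(5) by blast+
  have "x = a" using m1 m2 assms(1-4) by auto
  moreover have "z = c" using m1 m2 assms(1-4) by auto
  moreover have "y = b" using m1 m2 assms(1-4) \<open>x = a\<close> \<open>z = c\<close> by auto
  ultimately show ?thesis by simp
qed

lemma sort3:
  fixes A :: "nat set"
  assumes "card A = 3"
  shows "\<exists>x y z. x < y \<and> y < z \<and> A = {x,y,z}"
proof -
  from assms[unfolded card_3_iff] obtain a b c where A: "A = {a,b,c}" "a \<noteq> b" "b \<noteq> c" "a \<noteq> c"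
    by blast
  show ?thesis
  proof (cases "a < b")
    case True
    then show ?thesis
    proof (cases "b < c")
      case True then show ?thesis using \<open>a < b\<close> A by blast
    next
      case False
      then have "c < b" using A by simp
      then show ?thesis
      proof (cases "a < c")
        case True then show ?thesis using \<open>c < b\<close> A by (intro exI[of _ a] exI[of _ c] exI[of _ b]) auto
      next
        case False then have "c < a" using A by simp
        then show ?thesis using \<open>a < b\<close> A by (intro exI[of _ c] exI[of _ a] exI[of _ b]) auto
      qed
    qed
  next
    case False
    then have "b < a" using A by simp
    then show ?thesis
    proof (cases "a < c")
      case True then show ?thesis using \<open>b < a\<close> A by (intro exI[of _ b] exI[of _ a] exI[of _ c]) auto
    next
      case False
      then have "c < a" using A by simp
      then show ?thesis
      proof (cases "b < c")
        case True then show ?thesis using \<open>c < a\<close> A by (intro exI[of _ b] exI[of _ c] exI[of _ a]) auto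
      next
        case False then have "c < b" using A by simp
        then show ?thesis using \<open>b < a\<close> A by (intro exI[of _ c] exI[of _ b] exI[of _ a]) auto
      qed
    qed
  qed
qed

context cons begin

definition Tall :: "(nat \<times> nat \<times> nat) set" where
  "Tall = {(x,y,z). x < y \<and> y < z \<and> z < n0}"
definition Tgood :: "(nat \<times> nat \<times> nat) set" where
  "Tgood = {(x,y,z). x < y \<and> y < z \<and> z < n0 \<and> h x y < h y z}"
definition Tbad :: "(nat \<times> nat \<times> nat) set" where
  "Tbad = {(x,y,z). x < y \<and> y < z \<and> z < n0 \<and> h y z \<le> h x y}"
definition Ed :: "nat set set" where
  "Ed = (\<lambda>(x,y,z). {x,y,z}) ` Tgood"

lemma fin_Tall: "finite Tall"
proof -
  have "Tall \<subseteq> {..<n0} \<times> {..<n0} \<times> {..<n0}" unfolding Tall_def by auto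
  then show ?thesis by (rule finite_subset) simp
qed

lemma inj_trip: "inj_on (\<lambda>(x,y,z). {x,y,z::nat}) Tall"
proof (rule inj_onI)
  fix p q assume p: "p \<in> Tall" and q: "q \<in> Tall"
    and e: "(\<lambda>(x,y,z). {x,y,z::nat}) p = (\<lambda>(x,y,z). {x,y,z::nat}) q"
  obtain x y z where px: "p = (x,y,z)" by (cases p) auto
  obtain a b c where qa: "q = (a,b,c)" by (cases q) auto
  have "x < y" "y < z" "a < b" "b < c" using p q px qa unfolding Tall_def by auto
  moreover have "{x,y,z} = {a,b,c}" using e px qa by simp
  ultimately have "x = a \<and> y = b \<and> z = c" by (rule sorted_eq)
  then show "p = q" using px qa by simp
qed

lemma card_Tall: "card Tall = n0 choose 3"
proof -
  have "(\<lambda>(x,y,z). {x,y,z::nat}) ` Tall = {B. B \<subseteq> {..<n0} \<and> card B = 3}"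
  proof
    show "(\<lambda>(x,y,z). {x,y,z::nat}) ` Tall \<subseteq> {B. B \<subseteq> {..<n0} \<and> card B = 3}"
      unfolding Tall_def by auto
    show "{B. B \<subseteq> {..<n0} \<and> card B = 3} \<subseteq> (\<lambda>(x,y,z). {x,y,z::nat}) ` Tall"
    proof
      fix B assume "B \<in> {B. B \<subseteq> {..<n0} \<and> card B = 3}"
      then have B: "B \<subseteq> {..<n0}" "card B = 3" by auto
      obtain x y z where "x < y" "y < z" "B = {x,y,z}" using sort3[OF B(2)] by blast
      then show "B \<in> (\<lambda>(x,y,z). {x,y,z::nat}) ` Tall"
        using B(1) unfolding Tall_def by (intro image_eqI[of _ _ "(x,y,z)"]) auto
    qed
  qed
  then have "card ((\<lambda>(x,y,z). {x,y,z::nat}) ` Tall) = n0 choose 3"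
    using n_subsets[of "{..<n0}" 3] by simp
  then show ?thesis using card_image[OF inj_trip] by simp
qed

lemma card_Ed: "card Ed = card Tgood"
proof -
  have "inj_on (\<lambda>(x,y,z). {x,y,z::nat}) Tgood"
    using inj_trip by (rule inj_on_subset) (auto simp: Tall_def Tgood_def)
  then show ?thesis unfolding Ed_def by (rule card_image)
qed

lemma fin_Zs: "finite (Zs y)"
proof -
  have "Zs y \<subseteq> {..<nat \<lceil>hi y\<rceil>}"
  proof
    fix z assume "z \<in> Zs y"
    then have "real z < hi y" unfolding Zs_def by simp
    then have "int z < \<lceil>hi y\<rceil>" by (simp add: less_ceiling_iff)
    then show "z \<in> {..<nat \<lceil>hi y\<rceil>}" by simp
  qed
  then show ?thesis by (rule finite_subset) simp
qed

lemma fin_Xs: "finite (Xs y)"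
  by (rule finite_subset[of _ "{..<y}"]) (auto simp: Xs_def)

lemma card_Tbad: "real (card Tbad) \<le> (\<Sum>y<n0. real (card (Xs y)) * real (card (Zs y)))"
proof -
  have sub: "Tbad \<subseteq> (\<lambda>(y,x,z). (x,y,z)) ` (SIGMA y:{..<n0}. Xs y \<times> Zs y)"
  proof
    fix t assume "t \<in> Tbad"
    then obtain x y z where t: "t = (x,y,z)" "x < y" "y < z" "z < n0" "h y z \<le> h x y"
      unfolding Tbad_def by auto
    have "lo y \<le> real x" "real z < hi y" using bad[OF t(2-5)] by auto
    then have "(y,x,z) \<in> (SIGMA y:{..<n0}. Xs y \<times> Zs y)"
      using t unfolding Xs_def Zs_def by auto
    then show "t \<in> (\<lambda>(y,x,z). (x,y,z)) ` (SIGMA y:{..<n0}. Xs y \<times> Zs y)"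
      using t(1) by force
  qed
  have fin: "finite (SIGMA y:{..<n0}. Xs y \<times> Zs y)"
    using fin_Xs fin_Zs by (intro finite_SigmaI) auto
  have "card Tbad \<le> card ((\<lambda>(y,x,z). (x,y,z)) ` (SIGMA y:{..<n0}. Xs y \<times> Zs y))"
    by (rule card_mono[OF finite_imageI[OF fin] sub])
  also have "\<dots> \<le> card (SIGMA y:{..<n0}. Xs y \<times> Zs y)" by (rule card_image_le[OF fin])
  also have "\<dots> = (\<Sum>y<n0. card (Xs y) * card (Zs y))"
    using fin_Xs fin_Zs by (subst card_SigmaI) (auto simp: card_cartesian_product)
  finally have "card Tbad \<le> (\<Sum>y<n0. card (Xs y) * card (Zs y))" .
  then have "real (card Tbad) \<le> real (\<Sum>y<n0. card (Xs y) * card (Zs y))" by (simp only: of_nat_le_iff)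
  then show ?thesis by simp
qed

lemma card_Ed_bound:
  "real (card Ed) \<ge> real (n0 choose 3) - real n0 ^ 3 / (6 * (real m * (real m + 1))) - 2 * real n0 ^ 2"
proof -
  have "Tall = Tgood \<union> Tbad" unfolding Tall_def Tgood_def Tbad_def by auto
  moreover have "Tgood \<inter> Tbad = {}" unfolding Tgood_def Tbad_def by auto
  moreover have "finite Tgood" by (rule finite_subset[OF _ fin_Tall]) (auto simp: Tall_def Tgood_def)
  moreover have "finite Tbad" by (rule finite_subset[OF _ fin_Tall]) (auto simp: Tall_def Tbad_def)
  ultimately have "card Tall = card Tgood + card Tbad" by (simp add: card_Un_disjoint)
  then have "real (n0 choose 3) = real (card Ed) + real (card Tbad)" using card_Tall card_Ed by simp
  then show ?thesis using card_Tbad sumXZ by linarith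
qed

lemma path_free:
  assumes "n0 \<le> n"
  shows "\<not> ocontains (n, Ed) (tight_path (2*m+2))"
proof
  assume "ocontains (n, Ed) (tight_path (2*m+2))"
  then have "\<exists>f. strict_mono_on {..<2*m+2} f \<and> f ` {..<2*m+2} \<subseteq> {..<n} \<and>
     (\<forall>e\<in>{{j, j+1, j+2} | j. j + 2 < 2*m+2}. f ` e \<in> Ed)"
    unfolding ocontains_def tight_path_def by simp
  then obtain f where f: "strict_mono_on {..<2*m+2} f"
    and fe: "\<forall>e\<in>{{j, j+1, j+2} | j. j + 2 < 2*m+2}. f ` e \<in> Ed"
    by blast
  have step: "f (Suc (Suc j)) < n0 \<and> h (f j) (f (Suc j)) < h (f (Suc j)) (f (Suc (Suc j)))"
    if j: "j + 2 < 2*m+2" for j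
  proof -
    have "f ` {j, j+1, j+2} \<in> Ed" using fe j by blast
    then have "{f j, f (j+1), f (j+2)} \<in> Ed" by simp
    then obtain x y z where xyz: "{f j, f (j+1), f (j+2)} = {x,y,z}" "x < y" "y < z" "z < n0" "h x y < h y z"
      unfolding Ed_def Tgood_def by auto
    have "f j < f (j+1)" "f (j+1) < f (j+2)"
      using j f by (auto intro: strict_mono_onD)
    then have "f j = x \<and> f (j+1) = y \<and> f (j+2) = z" using sorted_eq[of "f j" "f (j+1)" "f (j+2)" x y z] xyz by simp
    then show ?thesis using xyz by simp
  qed
  have ind: "j + 2 < 2*m+2 \<Longrightarrow> j \<le> h (f j) (f (Suc j))" for j
  proof (induction j)
    case 0 then show ?case by simp
  next
    case (Suc j)
    then have "j \<le> h (f j) (f (Suc j))" by simp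
    then show ?case using step[of j] Suc.prems by simp
  qed
  define j where "j = 2*m - 1"
  have j2: "j + 2 < 2*m+2" "Suc j = 2*m" using m1 j_def by auto
  have "2*m \<le> h (f (Suc j)) (f (Suc (Suc j)))" using ind[OF j2(1)] step[OF j2(1)] j2(2) by simp
  moreover have "f (Suc j) < f (Suc (Suc j))" using f j2 by (auto intro: strict_mono_onD)
  moreover have "f (Suc (Suc j)) < n0" using step[OF j2(1)] by simp
  ultimately show False using h_bound[of "f (Suc j)" "f (Suc (Suc j))"] by simp
qed

lemma hyp: assumes "n0 \<le> n" shows "hypergraph3 (n, Ed)"
proof -
  have "{x,y,z} \<subseteq> {..<n} \<and> card {x,y,z} = 3" if "x < y" "y < z" "z < n0" for x y z :: nat
    using that assms by auto
  then show ?thesis unfolding hypergraph3_def Ed_def Tgood_def by auto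
qed

lemma ex3_ge: assumes "n0 \<le> n" shows "card Ed \<le> ex3 n (tight_path (2*m+2))"
proof -
  let ?A = "{card E | E. hypergraph3 (n, E) \<and> \<not> ocontains (n, E) (tight_path (2*m+2))}"
  have "?A \<subseteq> {..card (Pow {..<n})}"
  proof
    fix k assume "k \<in> ?A"
    then obtain E where E: "k = card E" "hypergraph3 (n, E)" by auto
    then have "E \<subseteq> Pow {..<n}" unfolding hypergraph3_def by auto
    then have "card E \<le> card (Pow {..<n})" by (intro card_mono) auto
    then show "k \<in> {..card (Pow {..<n})}" using E by simp
  qed
  then have "finite ?A" by (rule finite_subset) simp
  moreover have "card Ed \<in> ?A" using hyp[OF assms] path_free[OF assms] by blast
  ultimately show ?thesis unfolding ex3_def by (rule Max_ge)
qed

end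

lemma choose2_real: "real (k choose 2) = real k * (real k - 1) / 2"
proof (induction k)
  case 0 then show ?case by simp
next
  case (Suc k)
  have "(Suc k choose 2) = (k choose 1) + (k choose 2)"
    by (simp add: numeral_2_eq_2)
  then show ?case using Suc by (simp add: field_simps)
qed

lemma choose3_real: "real (k choose 3) = real k * (real k - 1) * (real k - 2) / 6"
proof (induction k)
  case 0 then show ?case by simp
next
  case (Suc k)
  have "(Suc k choose 3) = (k choose 2) + (k choose 3)"
    by (simp add: numeral_3_eq_3 numeral_2_eq_2)
  then show ?case using Suc choose2_real[of k] by (simp add: field_simps)
qed

lemma final_arith:
  fixes x y d E :: real
  assumes d: "d \<ge> 2" and x: "x \<ge> d + 3" and yx: "y \<le> x" and yd: "y > x - d" and y2: "y \<ge> 2"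
    and E: "E \<ge> y*(y-1)*(y-2)/6 - y^3/(6*d) - 2*y^2"
  shows "E \<ge> (1 - 1/d) * (x*(x-1)*(x-2)/6) - (d+5)*x^2"
proof -
  define P where "P = (\<lambda>t::real. t*(t-1)*(t-2)/6)"
  have a: "y^3 \<le> y*(y-1)*(y-2) + 3*y^2"
  proof -
    have "y^3 = y*(y-1)*(y-2) + 3*y^2 - 2*y" by (simp add: power3_eq_cube power2_eq_square algebra_simps)
    then show ?thesis using y2 by simp
  qed
  have b: "y^3/(6*d) \<le> P y / d + y^2"
  proof -
    have "y^3/(6*d) \<le> (y*(y-1)*(y-2) + 3*y^2)/(6*d)" using a d by (intro divide_right_mono) auto
    also have "\<dots> = P y / d + y^2/(2*d)" unfolding P_def using d by (simp add: field_simps)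
    also have "y^2/(2*d) \<le> y^2"
    proof -
      have "1*y^2 \<le> (2*d)*y^2" using d by (intro mult_right_mono) auto
      then show ?thesis using d by (simp add: divide_le_eq mult.commute)
    qed
    finally show ?thesis by simp
  qed
  have c: "E \<ge> (1 - 1/d) * P y - 3*y^2"
  proof -
    have "(1 - 1/d) * P y = P y - P y / d" by (simp add: algebra_simps)
    then show ?thesis using E b unfolding P_def by linarith
  qed
  define a where "a = d + 2"
  have xa: "x - a \<ge> 0" using x a_def by simp
  have d1: "(x - a)^3 \<ge> x^3 - 3*a*x^2"
  proof -
    have "(x-a)^3 = x^3 - 3*a*x^2 + a^2*(3*x - a)" by (simp add: power3_eq_cube power2_eq_square algebra_simps)
    moreover have "a^2*(3*x - a) \<ge> 0" using xa a_def d by (intro mult_nonneg_nonneg) auto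
    ultimately show ?thesis by simp
  qed
  have d2: "(y-2)^3 \<ge> (x-a)^3" using yd xa a_def by (intro power_mono) auto
  have d3: "P y \<ge> (y-2)^3/6"
  proof -
    have "y*(y-1) \<ge> (y-2)*(y-2)" using y2 by (simp add: algebra_simps)
    then have "y*(y-1)*(y-2) \<ge> (y-2)*(y-2)*(y-2)" using y2 by (intro mult_right_mono) auto
    then show ?thesis unfolding P_def by (simp add: power3_eq_cube)
  qed
  have d4: "P x \<le> x^3/6"
  proof -
    have "x*(x-1)*(x-2) = x^3 - 3*x^2 + 2*x" by (simp add: power3_eq_cube power2_eq_square algebra_simps)
    moreover have "2*x \<le> 3*x^2" using x d by (simp add: power2_eq_square)
    ultimately show ?thesis unfolding P_def by simp
  qed
  have Py: "P y \<ge> P x - a*x^2/2" using d1 d2 d3 d4 by linarith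
  have ysq: "y^2 \<le> x^2" using yx y2 by (intro power_mono) auto
  have dd: "0 \<le> 1 - 1/d" "1 - 1/d \<le> 1" using d by auto
  define q where "q = 1 - 1/d"
  define X where "X = a*x^2"
  have q01: "0 \<le> q" "q \<le> 1" using dd q_def by auto
  have X0: "0 \<le> X" unfolding X_def a_def using d by simp
  have h1: "q * P y \<ge> q * (P x - X/2)" using Py q01 unfolding X_def by (intro mult_left_mono) auto
  have h2: "q * (P x - X/2) = q * P x - (q*X)/2" by (simp add: algebra_simps)
  have h3: "q * X \<le> X" using q01 X0 by (intro mult_left_le_one_le) auto
  have "q * P y \<ge> q * P x - X/2" using h1 h2 h3 by linarith
  then have "(1 - 1/d) * P y \<ge> (1 - 1/d) * P x - a*x^2/2" unfolding q_def X_def .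
  then have "E \<ge> (1 - 1/d) * P x - a*x^2/2 - 3*x^2" using c ysq by linarith
  moreover have "a*x^2/2 + 3*x^2 \<le> (d+5)*x^2" using a_def d by (simp add: algebra_simps)
  ultimately show ?thesis unfolding P_def by linarith
qed


theorem corollary4p6:
  fixes s :: nat
  assumes "s \<ge> 4" and "even s"
  shows "\<exists>g :: nat \<Rightarrow> real. g \<longlonglongrightarrow> 0 \<and>
    (\<forall>\<^sub>F n in sequentially.
       real (ex3 n (tight_path s)) \<ge>
         (1 - 4 / (real (s - 2) * real s) + g n) * real (n choose 3))"
proof -
  obtain m where sm: "s = 2*m + 2" and m1: "1 \<le> m"
  proof -
    obtain k where "s = 2*k" using assms(2) by blast
    then show ?thesis using that[of "k - 1"] assms(1) by simp
  qed
  define D where "D = m * (m+1)"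
  have D2: "2 \<le> D"
  proof -
    have "1*2 \<le> m*(m+1)" using m1 by (intro mult_le_mono) auto
    then show ?thesis unfolding D_def by simp
  qed
  define K where "K = real D + 5"
  define g where "g = (\<lambda>n::nat. - (24 * K) / real n)"
  have glim: "g \<longlonglongrightarrow> 0"
    unfolding g_def by (rule lim_const_over_n)
  have frac: "4 / (real (s - 2) * real s) = 1 / real D"
  proof -
    have mp: "real m * (real m + 1) > 0" using m1 by simp
    have e1: "real (s - 2) * real s = 4 * (real m * (real m + 1))" unfolding sm by (simp add: algebra_simps)
    have e2: "real D = real m * (real m + 1)" unfolding D_def by (simp add: algebra_simps)
    have "4 / (real (s - 2) * real s) = 4 / (4 * (real m * (real m + 1)))" by (simp only: e1)
    also have "\<dots> = 1 / (real m * (real m + 1))" using mp by simp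
    finally show ?thesis using e2 by simp
  qed
  have ev: "real (ex3 n (tight_path s)) \<ge> (1 - 4 / (real (s - 2) * real s) + g n) * real (n choose 3)"
    if n: "D + 3 \<le> n" for n
  proof -
    define M where "M = n div D"
    have M1: "1 \<le> M"
    proof -
      have "D div D \<le> n div D" using n by (intro div_le_mono) simp
      then show ?thesis unfolding M_def using D2 by simp
    qed
    interpret cons m M using m1 M1 by unfold_locales
    have n0D: "n0 = D * M" unfolding n0_eq D_def by simp
    have dm: "n = D * M + n mod D" unfolding M_def by simp
    have md: "n mod D < D" using D2 by simp
    have n0n: "n0 \<le> n" using dm n0D by linarith
    have n0gt: "n < n0 + D" using dm md n0D by linarith
    have Ege: "real (card Ed) \<ge> real (n0 choose 3) - real n0 ^ 3 / (6 * real D) - 2 * real n0 ^ 2"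
      using card_Ed_bound unfolding D_def by (simp add: algebra_simps)
    have ex: "real (card Ed) \<le> real (ex3 n (tight_path s))"
      using ex3_ge[OF n0n] sm by simp
    have y2: "real n0 \<ge> 2" using n0gt n by linarith
    have fa: "real (ex3 n (tight_path s)) \<ge> (1 - 1/real D) * (real n*(real n-1)*(real n-2)/6) - (real D+5)*real n^2"
      using final_arith[of "real D" "real n" "real n0" "real (ex3 n (tight_path s))"]
        D2 n n0n n0gt y2 Ege ex choose3_real[of n0] by simp
    have npos: "real n > 0" using n by simp
    have "(1 - 4 / (real (s - 2) * real s) + g n) * real (n choose 3)
        = (1 - 1/real D) * (real n*(real n-1)*(real n-2)/6) - K * (4 * ((real n-1)*(real n-2)))"
      unfolding frac g_def choose3_real using npos by (simp add: field_simps)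
    also have "K * (4 * ((real n-1)*(real n-2))) \<ge> K * real n^2"
    proof -
      have "4 * ((real n-1)*(real n-2)) - real n^2 = 3 * real n^2 - 12 * real n + 8"
        by (simp add: power2_eq_square algebra_simps)
      also have "\<dots> \<ge> 0"
      proof -
        have "real n \<ge> 4" using n D2 by simp
        then have "3 * real n * real n \<ge> 12 * real n" by simp
        then show ?thesis by (simp add: power2_eq_square)
      qed
      finally have "4 * ((real n-1)*(real n-2)) \<ge> real n^2" by simp
      moreover have "K \<ge> 0" unfolding K_def by simp
      ultimately show ?thesis by (intro mult_left_mono)
    qed
    then have "(1 - 1/real D) * (real n*(real n-1)*(real n-2)/6) - K * (4 * ((real n-1)*(real n-2)))
       \<le> (1 - 1/real D) * (real n*(real n-1)*(real n-2)/6) - (real D+5)*real n^2"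
      unfolding K_def by simp
    finally show ?thesis using fa by simp
  qed
  show ?thesis
    by (intro exI[of _ g] conjI glim eventually_sequentiallyI[of "D+3"] ev)
qed

end
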